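(* Let $\chi$ be a kernel, let $f:\mathbb{R}^+\to\mathbb{R}$ be bounded, and let $t\in\mathbb{R}^+$ be a point of non-removable jump discontinuity of $f$. For $\alpha\in\mathbb{R}$ the following are equivalent: (i) $\displaystyle\lim_{w\to\infty,\ w\log t\in\mathbb{Z}}(S_w^\chi f)(t)=\alpha f(t+0)+[1-\alpha-\chi(1)]f(t-0)+\chi(1)f(t)$; (ii) $\psi_\chi^-(1)=\alpha$; (iii) $\psi_\chi^+(1)=1-\alpha-\chi(1)$.
   Context: Let $\mathbb{R}^+=(0,\infty)$. For $\chi:\mathbb{R}^+\to\mathbb{R}$ and $\nu\ge 0$ set $M_\nu(\chi):=\sup_{u>0}\sum_{k\in\mathbb{Z}}|\chi(e^{-k}u)|\,|k-\log u|^\nu$ (with $|k-\log u|^0:=1$). A kernel is a function $\chi:\mathbb{R}^+\to\mathbb{R}$ such that (K1) $\sum_{k\in\mathbb{Z}}\chi(e^{-k}u)=1$ for every $u\in\mathbb{R}^+$, and (K2) $M_0(\chi)<\infty$ and $M_\nu(\chi)<\infty$ for some $\nu>0$. For a bounded $f:\mathbb{R}^+\to\mathbb{R}$, $w>0$ and $t\in\mathbb{R}^+$, the exponential sampling series is $(S_w^\chi f)(t)=\sum_{k\in\mathbb{Z}}\chi(e^{-k}t^w)\,f(e^{k/w})$. Define $\psi_\chi^+(u):=\sum_{k\in\mathbb{Z},\,k<\log u}\chi(e^{-k}u)$ and $\psi_\chi^-(u):=\sum_{k\in\mathbb{Z},\,k>\log u}\chi(e^{-k}u)$ for $u\in\mathbb{R}^+$.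 $f(t\pm0)$ denote the right/left limits of $f$ at $t$; $t$ is a non-removable jump discontinuity of $f$ if $f(t+0)$ and $f(t-0)$ exist, are finite, and $f(t+0)\ne f(t-0)$. The limit in (i) is taken as $w\to\infty$ through those $w>0$ with $w\log t\in\mathbb{Z}$. *)

theory Defs
  imports "HOL-Analysis.Analysis"
begin

definition mom_weight :: "real \<Rightarrow> int \<Rightarrow> real \<Rightarrow> real" where
  "mom_weight \<nu> k u = (if \<nu> = 0 then 1 else \<bar>real_of_int k - ln u\<bar> powr \<nu>)"

definition abs_moment :: "(real \<Rightarrow> real) \<Rightarrow> real \<Rightarrow> ennreal" where
  "abs_moment K \<nu> = (SUP u\<in>{0<..}. infsum (\<lambda>k::int. ennreal (\<bar>K (exp (- real_of_int k) * u)\<bar> * mom_weight \<nu> k u)) UNIV)"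

definition kernel :: "(real \<Rightarrow> real) \<Rightarrow> bool" where
  "kernel K \<longleftrightarrow>
     (\<forall>u>0. ((\<lambda>k::int. K (exp (- real_of_int k) * u)) has_sum 1) UNIV) \<and>
     abs_moment K 0 < \<infinity> \<and> (\<exists>\<nu>>0. abs_moment K \<nu> < \<infinity>)"

definition exp_sampling :: "(real \<Rightarrow> real) \<Rightarrow> real \<Rightarrow> (real \<Rightarrow> real) \<Rightarrow> real \<Rightarrow> real" where
  "exp_sampling K w f t = infsum (\<lambda>k::int. K (exp (- real_of_int k) * t powr w) * f (exp (real_of_int k / w))) UNIV"

definition psi_plus :: "(real \<Rightarrow> real) \<Rightarrow> real \<Rightarrow> real" where
  "psi_plus K u = infsum (\<lambda>k::int. K (exp (- real_of_int k) * u)) {k. real_of_int k < ln u}"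

definition psi_minus :: "(real \<Rightarrow> real) \<Rightarrow> real \<Rightarrow> real" where
  "psi_minus K u = infsum (\<lambda>k::int. K (exp (- real_of_int k) * u)) {k. real_of_int k > ln u}"

end

theory Submission
  imports Defs
begin

lemma sum_bd:
  fixes g h :: "int \<Rightarrow> real"
  assumes "g summable_on UNIV" "\<And>m. \<bar>h m\<bar> \<le> B"
  shows "(\<lambda>m. g m * h m) summable_on A"
proof -
  have "(\<lambda>m. norm (g m)) summable_on UNIV"
    using assms(1) summable_on_iff_abs_summable_on_real by blast
  hence "(\<lambda>m. \<bar>B\<bar> * \<bar>g m\<bar>) summable_on UNIV"
    by (simp add: summable_on_cmult_right)
  hence "(\<lambda>m. \<bar>g m * h m\<bar>) summable_on UNIV"
  proof (rule summable_on_comparison_test)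
    fix m :: int
    have "\<bar>h m\<bar> \<le> \<bar>B\<bar>" using assms(2)[of m] by linarith
    thus "\<bar>g m * h m\<bar> \<le> \<bar>B\<bar> * \<bar>g m\<bar>"
      unfolding abs_mult by (metis abs_ge_zero mult.commute mult_left_mono)
  qed simp
  hence "(\<lambda>m. g m * h m) summable_on UNIV"
    using summable_on_iff_abs_summable_on_real[of "\<lambda>m. g m * h m"] by simp
  thus ?thesis by (rule summable_on_subset) simp
qed

lemma dom_conv:
  fixes g L :: "int \<Rightarrow> real" and \<phi> :: "real \<Rightarrow> int \<Rightarrow> real"
  assumes gs: "g summable_on UNIV" and B: "\<And>w m. \<bar>\<phi> w m\<bar> \<le> B" "\<And>m. \<bar>L m\<bar> \<le> B"
    and lim: "\<And>m. ((\<lambda>w. \<phi> w m) \<longlongrightarrow> L m) F"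
  shows "((\<lambda>w. infsum (\<lambda>m. g m * \<phi> w m) UNIV) \<longlongrightarrow> infsum (\<lambda>m. g m * L m) UNIV) F"
proof (rule tendstoI)
  fix \<epsilon> :: real assume e: "\<epsilon> > 0"
  define a where "a = (\<lambda>m. \<bar>g m\<bar>)"
  have as: "a summable_on UNIV"
    using gs summable_on_iff_abs_summable_on_real unfolding a_def by auto
  have B0: "B \<ge> 0" using B(2)[of 0] by linarith
  define \<delta> where "\<delta> = \<epsilon> / (4 * (B + 1))"
  have d: "\<delta> > 0" using e B0 unfolding \<delta>_def by auto
  obtain S where S: "finite S" "dist (sum a S) (infsum a UNIV) \<le> \<delta>"
    using infsum_finite_approximation[OF as d] by blast
  have asS: "a summable_on (- S)" using as by (rule summable_on_subset) simp
  have "infsum a UNIV = infsum a (S \<union> - S)" by simp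
  also have "\<dots> = sum a S + infsum a (- S)"
    using infsum_Un_disjoint[OF summable_on_finite[OF S(1)] asS] S(1) by simp
  finally have tail: "infsum a (- S) \<le> \<delta>" using S(2) by (simp add: dist_real_def)
  have fin: "((\<lambda>w. \<Sum>m\<in>S. g m * (\<phi> w m - L m)) \<longlongrightarrow> (\<Sum>m\<in>S. g m * (L m - L m))) F"
    by (intro tendsto_sum tendsto_mult tendsto_diff tendsto_const lim)
  hence "eventually (\<lambda>w. dist (\<Sum>m\<in>S. g m * (\<phi> w m - L m)) (\<Sum>m\<in>S. g m * (L m - L m)) < \<epsilon>/2) F"
    using e unfolding tendsto_iff by (meson half_gt_zero)
  hence "eventually (\<lambda>w. dist (\<Sum>m\<in>S. g m * (\<phi> w m - L m)) 0 < \<epsilon>/2) F"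
    by simp
  thus "eventually (\<lambda>w. dist (infsum (\<lambda>m. g m * \<phi> w m) UNIV) (infsum (\<lambda>m. g m * L m) UNIV) < \<epsilon>) F"
  proof (rule eventually_mono)
    fix w assume fw: "dist (\<Sum>m\<in>S. g m * (\<phi> w m - L m)) 0 < \<epsilon>/2"
    have hb: "\<bar>\<phi> w m - L m\<bar> \<le> 2 * B" for m using B(1)[of w m] B(2)[of m] by linarith
    have s1: "(\<lambda>m. g m * \<phi> w m) summable_on UNIV" by (rule sum_bd[OF gs B(1)])
    have s2: "(\<lambda>m. g m * L m) summable_on UNIV" by (rule sum_bd[OF gs B(2)])
    have sd: "(\<lambda>m. g m * (\<phi> w m - L m)) summable_on A" for A by (rule sum_bd[OF gs hb])
    have "infsum (\<lambda>m. g m * \<phi> w m) UNIV - infsum (\<lambda>m. g m * L m) UNIV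
        = infsum (\<lambda>m. g m * \<phi> w m + - (g m * L m)) UNIV"
      using infsum_add[OF s1 summable_on_uminus[THEN iffD2, OF s2]] infsum_uminus[of "\<lambda>m. g m * L m"] by simp
    also have "\<dots> = infsum (\<lambda>m. g m * (\<phi> w m - L m)) (S \<union> - S)"
      by (simp add: algebra_simps)
    also have "\<dots> = (\<Sum>m\<in>S. g m * (\<phi> w m - L m)) + infsum (\<lambda>m. g m * (\<phi> w m - L m)) (- S)"
      using infsum_Un_disjoint[OF sd sd, of S "- S"] S(1) by simp
    finally have eq: "infsum (\<lambda>m. g m * \<phi> w m) UNIV - infsum (\<lambda>m. g m * L m) UNIV
        = (\<Sum>m\<in>S. g m * (\<phi> w m - L m)) + infsum (\<lambda>m. g m * (\<phi> w m - L m)) (- S)" .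
    have "\<bar>infsum (\<lambda>m. g m * (\<phi> w m - L m)) (- S)\<bar> \<le> infsum (\<lambda>m. norm (g m * (\<phi> w m - L m))) (- S)"
      using norm_infsum_bound[of "\<lambda>m. g m * (\<phi> w m - L m)" "- S"] sd[of "- S"]
        summable_on_iff_abs_summable_on_real[of "\<lambda>m. g m * (\<phi> w m - L m)" "- S"] by simp
    also have "\<dots> \<le> infsum (\<lambda>m. 2 * B * a m) (- S)"
    proof (rule infsum_mono)
      show "(\<lambda>m. norm (g m * (\<phi> w m - L m))) summable_on - S"
        using sd[of "- S"] summable_on_iff_abs_summable_on_real[of "\<lambda>m. g m * (\<phi> w m - L m)" "- S"] by simp
      show "(\<lambda>m. 2 * B * a m) summable_on - S" using asS by (simp add: summable_on_cmult_right)
      fix m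
      show "norm (g m * (\<phi> w m - L m)) \<le> 2 * B * a m"
        using hb[of m] unfolding a_def by (simp add: abs_mult mult.commute mult_left_mono)
    qed
    also have "\<dots> = 2 * B * infsum a (- S)" by (rule infsum_cmult_right) (use asS in simp)
    also have "\<dots> \<le> 2 * B * \<delta>" using tail B0 by (simp add: mult_left_mono)
    also have "\<dots> < \<epsilon> / 2" using e B0 unfolding \<delta>_def by (simp add: field_simps)
    finally have t2: "\<bar>infsum (\<lambda>m. g m * (\<phi> w m - L m)) (- S)\<bar> < \<epsilon> / 2" .
    show "dist (infsum (\<lambda>m. g m * \<phi> w m) UNIV) (infsum (\<lambda>m. g m * L m) UNIV) < \<epsilon>"
      using fw t2 eq by (simp add: dist_real_def)
  qed
qed

lemma nontriv: "inf at_top (principal {w::real. w > 0 \<and> w * c \<in> \<int>}) \<noteq> bot"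
proof
  assume "inf at_top (principal {w::real. w > 0 \<and> w * c \<in> \<int>}) = bot"
  hence "eventually (\<lambda>_. False) (inf at_top (principal {w::real. w > 0 \<and> w * c \<in> \<int>}))" by simp
  hence "eventually (\<lambda>w. w \<in> {w::real. w > 0 \<and> w * c \<in> \<int>} \<longrightarrow> False) at_top"
    by (simp only: eventually_inf_principal)
  then obtain N where N: "\<And>w. w \<ge> N \<Longrightarrow> \<not> (w > 0 \<and> w * c \<in> \<int>)"
    by (auto simp: eventually_at_top_linorder)
  show False
  proof (cases "c = 0")
    case True
    thus False using N[of "max N 1"] by auto
  next
    case False
    define d where "d = \<bar>c\<bar>"
    have d: "d > 0" using False by (simp add: d_def)
    define n where "n = max (ceiling (N * d)) 1"
    define w where "w = of_int n / d"
    have n1: "real_of_int n \<ge> 1" unfolding n_def by simp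
    have nN: "real_of_int n \<ge> N * d" unfolding n_def
      by (metis le_of_int_ceiling max.cobounded1 of_int_le_iff order_trans)
    have wpos: "w > 0" using n1 d unfolding w_def by simp
    have wN: "w \<ge> N" using nN d unfolding w_def by (simp add: field_simps)
    have "w * c \<in> \<int>"
    proof (cases "c > 0")
      case True
      hence "w * c = of_int n" unfolding w_def d_def by simp
      thus ?thesis by simp
    next
      case f: False
      hence "w * c = - of_int n" using False unfolding w_def d_def by simp
      thus ?thesis by simp
    qed
    thus False using N[OF wN] wpos by simp
  qed
qed

theorem theorem2:
  fixes K f :: "real \<Rightarrow> real" and t fp fm \<alpha> :: real
  assumes "kernel K"
    and "\<exists>B. \<forall>x>0. \<bar>f x\<bar> \<le> B"
    and "t > 0"
    and "(f \<longlongrightarrow> fp) (at_right t)"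
    and "(f \<longlongrightarrow> fm) (at_left t)"
    and "fp \<noteq> fm"
  shows "(((\<lambda>w. exp_sampling K w f t) \<longlongrightarrow> \<alpha> * fp + (1 - \<alpha> - K 1) * fm + K 1 * f t)
            (inf at_top (principal {w. w > 0 \<and> w * ln t \<in> \<int>}))
          \<longleftrightarrow> psi_minus K 1 = \<alpha>)
       \<and> (psi_minus K 1 = \<alpha> \<longleftrightarrow> psi_plus K 1 = 1 - \<alpha> - K 1)"
proof -
  define g where "g = (\<lambda>k::int. K (exp (- real_of_int k)))"
  have hs: "(g has_sum 1) UNIV"
  proof -
    have "\<forall>u>0. ((\<lambda>k::int. K (exp (- real_of_int k) * u)) has_sum 1) UNIV"
      using assms(1) unfolding kernel_def by blast
    hence "((\<lambda>k::int. K (exp (- real_of_int k) * 1)) has_sum 1) UNIV" by (meson zero_less_one)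
    thus ?thesis unfolding g_def by simp
  qed
  hence gs: "g summable_on UNIV" by (rule has_sum_imp_summable)
  have g1: "infsum g UNIV = 1" using hs by (rule infsumI)
  have gsub: "g summable_on A" for A using gs by (rule summable_on_subset) simp
  have pm: "psi_minus K 1 = infsum g {k. k > 0}" by (simp add: psi_minus_def g_def)
  have pp: "psi_plus K 1 = infsum g {k. k < 0}" by (simp add: psi_plus_def g_def)
  have K1: "K 1 = g 0" by (simp add: g_def)
  have split: "UNIV = {k::int. k < 0} \<union> ({0} \<union> {k. k > 0})" by auto
  have "infsum g UNIV = infsum g {k. k < 0} + (g 0 + infsum g {k. k > 0})"
    apply (subst split)
    apply (subst infsum_Un_disjoint[OF gsub gsub])
     apply auto[1]
    apply (subst infsum_Un_disjoint[OF gsub gsub])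
     apply auto
    done
  hence tot: "psi_plus K 1 = 1 - K 1 - psi_minus K 1" using g1 pm pp K1 by simp
  define F where "F = inf at_top (principal {w::real. w > 0 \<and> w * ln t \<in> \<int>})"
  have Fnt: "F \<noteq> bot" unfolding F_def by (rule nontriv)
  obtain B where B: "\<And>x. x > 0 \<Longrightarrow> \<bar>f x\<bar> \<le> B" using assms(2) by blast
  define B' where "B' = B + \<bar>fp\<bar> + \<bar>fm\<bar> + \<bar>f t\<bar>"
  have B0: "B \<ge> 0" using B[of 1] by simp
  define \<phi> where "\<phi> = (\<lambda>w (m::int). f (t * exp (real_of_int m / w)))"
  define L where "L = (\<lambda>m::int. if m > 0 then fp else if m < 0 then fm else f t)"
  have bphi: "\<bar>\<phi> w m\<bar> \<le> B'" for w m
  proof -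
    have "\<bar>\<phi> w m\<bar> \<le> B" unfolding \<phi>_def using assms(3) by (intro B) simp
    thus ?thesis unfolding B'_def by linarith
  qed
  have bL: "\<bar>L m\<bar> \<le> B'" for m unfolding L_def B'_def using B0 by auto
  have lim: "((\<lambda>w. \<phi> w m) \<longlongrightarrow> L m) F" for m
  proof -
    have d0: "((\<lambda>w. real_of_int m / w) \<longlongrightarrow> 0) at_top"
      by (rule tendsto_divide_0[OF tendsto_const filterlim_at_top_imp_at_infinity[OF filterlim_ident]])
    have tt: "((\<lambda>w. t * exp (real_of_int m / w)) \<longlongrightarrow> t) at_top"
      using tendsto_mult[OF tendsto_const[of t] tendsto_exp[OF d0]] by simp
    have "((\<lambda>w. \<phi> w m) \<longlongrightarrow> L m) at_top"
    proof (cases "m > 0")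
      case True
      have "eventually (\<lambda>w. t * exp (real_of_int m / w) \<in> {t<..} \<and> t * exp (real_of_int m / w) \<noteq> t) at_top"
        using eventually_gt_at_top[of 0]
      proof (rule eventually_mono)
        fix w :: real assume "w > 0"
        hence "real_of_int m / w > 0" using True by simp
        hence "exp (real_of_int m / w) > 1" by simp
        thus "t * exp (real_of_int m / w) \<in> {t<..} \<and> t * exp (real_of_int m / w) \<noteq> t" using assms(3) True \<open>w > 0\<close> by simp
      qed
      hence "filterlim (\<lambda>w. t * exp (real_of_int m / w)) (at_right t) at_top"
        using tt filterlim_at by blast
      from filterlim_compose[OF assms(4) this] show ?thesis
        unfolding \<phi>_def L_def using True by simp
    next
      case False
      show ?thesis
      proof (cases "m < 0")
        case True
        have "eventually (\<lambda>w. t * exp (real_of_int m / w) \<in> {..<t} \<and> t * exp (real_of_int m / w) \<noteq> t) at_top"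
          using eventually_gt_at_top[of 0]
        proof (rule eventually_mono)
          fix w :: real assume "w > 0"
          hence "real_of_int m / w < 0" using True by (simp add: divide_neg_pos)
          hence "exp (real_of_int m / w) < 1" by simp
          thus "t * exp (real_of_int m / w) \<in> {..<t} \<and> t * exp (real_of_int m / w) \<noteq> t" using assms(3) True \<open>w > 0\<close> by simp
        qed
        hence "filterlim (\<lambda>w. t * exp (real_of_int m / w)) (at_left t) at_top"
          using tt filterlim_at by blast
        from filterlim_compose[OF assms(5) this] show ?thesis
          unfolding \<phi>_def L_def using True by simp
      next
        case f2: False
        hence "m = 0" using False by simp
        thus ?thesis unfolding \<phi>_def L_def by simp
      qed
    qed
    thus ?thesis unfolding F_def by (rule tendsto_mono[rotated]) simp
  qed
  have conv: "((\<lambda>w. infsum (\<lambda>m. g m * \<phi> w m) UNIV) \<longlongrightarrow> infsum (\<lambda>m. g m * L m) UNIV) F"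
    by (rule dom_conv[OF gs bphi bL lim])
  have lsub: "(\<lambda>m. g m * L m) summable_on A" for A by (rule sum_bd[OF gs bL])
  have "infsum (\<lambda>m. g m * L m) UNIV = infsum (\<lambda>m. g m * L m) {k. k < 0}
      + (g 0 * L 0 + infsum (\<lambda>m. g m * L m) {k. k > 0})"
    apply (subst split)
    apply (subst infsum_Un_disjoint[OF lsub lsub])
     apply auto[1]
    apply (subst infsum_Un_disjoint[OF lsub lsub])
     apply auto
    done
  also have "infsum (\<lambda>m. g m * L m) {k. k < 0} = infsum (\<lambda>m. g m * fm) {k. k < 0}"
    by (rule infsum_cong) (simp add: L_def)
  also have "\<dots> = psi_plus K 1 * fm" unfolding pp by (rule infsum_cmult_left) (rule gsub)
  also have "infsum (\<lambda>m. g m * L m) {k. k > 0} = infsum (\<lambda>m. g m * fp) {k. k > 0}"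
    by (rule infsum_cong) (simp add: L_def)
  also have "\<dots> = psi_minus K 1 * fp" unfolding pm by (rule infsum_cmult_left) (rule gsub)
  finally have Lim: "infsum (\<lambda>m. g m * L m) UNIV = psi_plus K 1 * fm + (K 1 * f t + psi_minus K 1 * fp)"
    unfolding K1 L_def by simp
  have ev: "eventually (\<lambda>w. exp_sampling K w f t = infsum (\<lambda>m. g m * \<phi> w m) UNIV) F"
    unfolding F_def eventually_inf_principal
  proof (rule always_eventually, intro allI impI)
    fix w :: real assume "w \<in> {w. w > 0 \<and> w * ln t \<in> \<int>}"
    hence w: "w > 0" "w * ln t \<in> \<int>" by auto
    from w(2) obtain n :: int where n: "w * ln t = of_int n" by (auto elim: Ints_cases)
    have tw: "t powr w = exp (of_int n)" using assms(3) n by (simp add: powr_def mult.commute)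
    have lt: "ln t = of_int n / w" using n w(1) by (simp add: field_simps)
    show "exp_sampling K w f t = infsum (\<lambda>m. g m * \<phi> w m) UNIV"
      unfolding exp_sampling_def
    proof (rule sym, rule infsum_reindex_bij_witness[where j = "\<lambda>m. m + n" and i = "\<lambda>k. k - n"])
      fix m :: int
      have "exp (- real_of_int (m + n)) * exp (of_int n) = exp (- real_of_int m)"
        by (simp add: exp_add[symmetric])
      moreover have "exp (real_of_int (m + n) / w) = t * exp (real_of_int m / w)"
      proof -
        have "real_of_int (m + n) / w = real_of_int m / w + ln t" using lt by (simp add: add_divide_distrib)
        thus ?thesis using assms(3) by (simp add: exp_add)
      qed
      ultimately show "K (exp (- real_of_int (m + n)) * t powr w) * f (exp (real_of_int (m + n) / w))
          = g m * \<phi> w m" unfolding g_def \<phi>_def tw by simp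
    qed auto
  qed
  have conv2: "((\<lambda>w. exp_sampling K w f t) \<longlongrightarrow> psi_plus K 1 * fm + (K 1 * f t + psi_minus K 1 * fp)) F"
    using conv Lim tendsto_cong[OF ev] by simp
  define T where "T = \<alpha> * fp + (1 - \<alpha> - K 1) * fm + K 1 * f t"
  have "((\<lambda>w. exp_sampling K w f t) \<longlongrightarrow> T) F \<longleftrightarrow> T = psi_plus K 1 * fm + (K 1 * f t + psi_minus K 1 * fp)"
  proof
    assume "((\<lambda>w. exp_sampling K w f t) \<longlongrightarrow> T) F"
    from tendsto_unique[OF Fnt this conv2] show "T = psi_plus K 1 * fm + (K 1 * f t + psi_minus K 1 * fp)" .
  next
    assume "T = psi_plus K 1 * fm + (K 1 * f t + psi_minus K 1 * fp)"
    thus "((\<lambda>w. exp_sampling K w f t) \<longlongrightarrow> T) F" using conv2 by simp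
  qed
  also have "\<dots> \<longleftrightarrow> (\<alpha> - psi_minus K 1) * (fp - fm) = 0"
    unfolding T_def tot by (simp add: algebra_simps)
  also have "\<dots> \<longleftrightarrow> psi_minus K 1 = \<alpha>" using assms(6) by auto
  finally have main: "((\<lambda>w. exp_sampling K w f t) \<longlongrightarrow> T) F \<longleftrightarrow> psi_minus K 1 = \<alpha>" .
  have second: "psi_minus K 1 = \<alpha> \<longleftrightarrow> psi_plus K 1 = 1 - \<alpha> - K 1" unfolding tot by linarith
  show ?thesis using main second unfolding T_def F_def by blast
qed

end
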